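(* Let $\mathcal N$ be an NDCS network with parties $A_1,\dots,A_n$, let $p$ be the output distribution of a causally consistent model on $\mathcal N$ (finite output alphabets), and let $f_i$ be arbitrary complex-valued functions of the outputs $a_i$. Then for every twisted Gram matrix $W$ (for any $d$, any vectors $\ket{\psi_1},\dots,\ket{\psi_n}\in\mathbb C^d$ and any permutations $\pi_i^\alpha$), the Schur product $\mathcal C(f_1,\dots,f_n)\circ W$ is positive semidefinite.
   Context: A network $\mathcal N$ is a bipartite graph between sources $S_\alpha$ and parties $A_i$ ($i=1,\dots,n$); $\alpha\to i$ means $S_\alpha$ is adjacent to $A_i$; no isolated vertices, and no two sources with comparable sets of adjacent parties. $\mathcal N$ is NDCS if any two distinct parties have at most one common adjacent source. Covariance matrix: $\mathcal C(f_1,\dots,f_n)_{ij}=\mathbb E[\bar f_i f_j]-\mathbb E[\bar f_i]\,\mathbb E[f_j]$. The Schur product is $(M\circ N)_{ij}=M_{ij}N_{ij}$. Twisted Gram matrix: given $d$, vectors $\ket{\psi_1},\dots,\ket{\psi_n}\in\mathbb C^d$, and for every pair $(\alpha,i)$ with $\alpha\to i$ a permutation $\pi_i^\alpha$ of $\{1,\dots,d\}$ with permutation matrix $P_{\pi_i^\alpha}$ ($P_{\pi}\ket x=\ket{\pi(x)}$), a twisted Gram matrix is an $n\times n$ Hermitian matrix $W$ with $W_{ii}=\langle\psi_i|\psi_i\rangle$ and $W_{ij}=\bra{\psi_i}P_{\pi_i^\alpha}^\dagger P_{\pi_j^\alpha}\ket{\psi_j}$ whenever $i\neq j$ and $\alpha\to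 i,j$ (well-defined by NDCS); entries $W_{ij}$ with $i\neq j$ sharing no source are arbitrary (subject to $W$ being Hermitian). Non-fanout inflation of order $d\ge 2$: choose, for every pair $(\alpha,i)$ with $\alpha\to i$, a permutation $\pi_i^\alpha$ of $\{1,\dots,d\}$. The inflated network has parties $A_i^{(k)}$ and sources $S_\alpha^{(k)}$ ($1\le k\le d$), with $S_\alpha^{(k)}$ adjacent to $A_i^{((\pi_i^\alpha)^{-1}(k))}$ whenever $\alpha\to i$, and no other adjacencies. Causally consistent model on $\mathcal N$: a joint distribution $p(a_1,\dots,a_n)$ of the outputs of $\mathcal N$ together with, for every non-fanout inflation of every order $d\ge2$, a joint distribution of the outputs $a_i^{(k)}$ of its parties, such that: (C0) if $A_i\neq A_j$ share no source in $\mathcal N$, then $p(a_i,a_j)=p(a_i)p(a_j)$; (C1) in every inflation, each $a_i^{(k)}$ has marginal $p(a_i)$, and if $A_i^{(k)}$ and $A_j^{(l)}$ with $i\neq j$ share a source in the inflation, then $(a_i^{(k)},a_j^{(l)})$ has joint distribution $p(a_i,a_j)$; (C2) in every inflation, if two distinct parties share no source, the joint distribution of their outputs is the product of their marginals. *)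

theory Defs
  imports "HOL-Probability.Probability" "HOL-Combinatorics.Permutations"
begin

text \<open>Parties are indexed by 0,...,n-1; sources are the elements of a set S of an
 arbitrary type; adj al i means that source al is adjacent to party i.\<close>

definition network :: "'s set \<Rightarrow> ('s \<Rightarrow> nat \<Rightarrow> bool) \<Rightarrow> nat \<Rightarrow> bool" where
  "network S adj n \<longleftrightarrow> finite S
     \<and> (\<forall>al\<in>S. \<exists>i<n. adj al i)
     \<and> (\<forall>i<n. \<exists>al\<in>S. adj al i)
     \<and> (\<forall>al\<in>S. \<forall>be\<in>S. al \<noteq> be \<longrightarrow>
           \<not> ({i. i < n \<and> adj al i} \<subseteq> {i. i < n \<and> adj be i}))"

definition ndcs :: "'s set \<Rightarrow> ('s \<Rightarrow> nat \<Rightarrow> bool) \<Rightarrow> nat \<Rightarrow> bool" where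
  "ndcs S adj n \<longleftrightarrow> network S adj n
     \<and> (\<forall>i<n. \<forall>j<n. i \<noteq> j \<longrightarrow> (\<forall>al\<in>S. \<forall>be\<in>S.
           adj al i \<and> adj al j \<and> adj be i \<and> adj be j \<longrightarrow> al = be))"

definition shares_source :: "'s set \<Rightarrow> ('s \<Rightarrow> nat \<Rightarrow> bool) \<Rightarrow> nat \<Rightarrow> nat \<Rightarrow> bool" where
  "shares_source S adj i j \<longleftrightarrow> (\<exists>al\<in>S. adj al i \<and> adj al j)"

definition perm_choice :: "'s set \<Rightarrow> ('s \<Rightarrow> nat \<Rightarrow> bool) \<Rightarrow> nat \<Rightarrow> nat \<Rightarrow> ('s \<Rightarrow> nat \<Rightarrow> nat \<Rightarrow> nat) \<Rightarrow> bool" where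
  "perm_choice S adj n d prm \<longleftrightarrow> (\<forall>al\<in>S. \<forall>i<n. adj al i \<longrightarrow> prm al i permutes {0..<d})"

text \<open>In the inflation, source copy S_al^(m) is adjacent to party copy A_i^((prm al i)^-1 m);
 equivalently party copy A_i^(k) is adjacent to source copy S_al^(prm al i k).\<close>
definition infl_shares_source :: "'s set \<Rightarrow> ('s \<Rightarrow> nat \<Rightarrow> bool) \<Rightarrow> ('s \<Rightarrow> nat \<Rightarrow> nat \<Rightarrow> nat)
    \<Rightarrow> nat \<times> nat \<Rightarrow> nat \<times> nat \<Rightarrow> bool" where
  "infl_shares_source S adj prm ik jl \<longleftrightarrow>
     (\<exists>al\<in>S. adj al (fst ik) \<and> adj al (fst jl) \<and> prm al (fst ik) (snd ik) = prm al (fst jl) (snd jl))"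

text \<open>Causally consistent model: p is the output distribution on the network (outputs of
 party i are coordinate i), and Q d prm is the output distribution of the non-fanout inflation
 of order d given by the permutation choice prm (outputs of party A_i^(k) are coordinate (i,k)).\<close>
definition causally_consistent ::
  "'s set \<Rightarrow> ('s \<Rightarrow> nat \<Rightarrow> bool) \<Rightarrow> nat \<Rightarrow> (nat \<Rightarrow> 'a) pmf
   \<Rightarrow> (nat \<Rightarrow> ('s \<Rightarrow> nat \<Rightarrow> nat \<Rightarrow> nat) \<Rightarrow> (nat \<times> nat \<Rightarrow> 'a) pmf) \<Rightarrow> bool" where
  "causally_consistent S adj n p Q \<longleftrightarrow>
     \<comment> \<open>C0\<close>
     (\<forall>i<n. \<forall>j<n. i \<noteq> j \<and> \<not> shares_source S adj i j \<longrightarrow>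
        map_pmf (\<lambda>x. (x i, x j)) p = pair_pmf (map_pmf (\<lambda>x. x i) p) (map_pmf (\<lambda>x. x j) p))
   \<and> (\<forall>d prm. 2 \<le> d \<and> perm_choice S adj n d prm \<longrightarrow>
        \<comment> \<open>C1\<close>
        (\<forall>i<n. \<forall>k<d. map_pmf (\<lambda>y. y (i, k)) (Q d prm) = map_pmf (\<lambda>x. x i) p)
      \<and> (\<forall>i<n. \<forall>j<n. \<forall>k<d. \<forall>l<d. i \<noteq> j \<and> infl_shares_source S adj prm (i, k) (j, l) \<longrightarrow>
           map_pmf (\<lambda>y. (y (i, k), y (j, l))) (Q d prm) = map_pmf (\<lambda>x. (x i, x j)) p)
        \<comment> \<open>C2\<close>
      \<and> (\<forall>i<n. \<forall>j<n. \<forall>k<d. \<forall>l<d. (i, k) \<noteq> (j, l) \<and> \<not> infl_shares_source S adj prm (i, k) (j, l) \<longrightarrow>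
           map_pmf (\<lambda>y. (y (i, k), y (j, l))) (Q d prm)
             = pair_pmf (map_pmf (\<lambda>y. y (i, k)) (Q d prm)) (map_pmf (\<lambda>y. y (j, l)) (Q d prm))))"

definition covariance :: "(nat \<Rightarrow> 'a) pmf \<Rightarrow> (nat \<Rightarrow> 'a \<Rightarrow> complex) \<Rightarrow> nat \<Rightarrow> nat \<Rightarrow> complex" where
  "covariance p f i j =
     measure_pmf.expectation p (\<lambda>x. cnj (f i (x i)) * f j (x j))
     - cnj (measure_pmf.expectation p (\<lambda>x. f i (x i))) * measure_pmf.expectation p (\<lambda>x. f j (x j))"

text \<open>Action of the permutation matrix P_pi (P_pi |x> = |prm x>) on a vector of C^d,
 vectors being functions on {0..<d}.\<close>
definition perm_mat_apply :: "nat \<Rightarrow> (nat \<Rightarrow> nat) \<Rightarrow> (nat \<Rightarrow> complex) \<Rightarrow> nat \<Rightarrow> complex" where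
  "perm_mat_apply d prm v y = (\<Sum>x<d. (if y = prm x then 1 else 0) * v x)"

definition cinner :: "nat \<Rightarrow> (nat \<Rightarrow> complex) \<Rightarrow> (nat \<Rightarrow> complex) \<Rightarrow> complex" where
  "cinner d u v = (\<Sum>y<d. cnj (u y) * v y)"

definition twisted_gram ::
  "'s set \<Rightarrow> ('s \<Rightarrow> nat \<Rightarrow> bool) \<Rightarrow> nat \<Rightarrow> nat \<Rightarrow> (nat \<Rightarrow> nat \<Rightarrow> complex)
   \<Rightarrow> ('s \<Rightarrow> nat \<Rightarrow> nat \<Rightarrow> nat) \<Rightarrow> (nat \<Rightarrow> nat \<Rightarrow> complex) \<Rightarrow> bool" where
  "twisted_gram S adj n d psi prm W \<longleftrightarrow>
     0 < d \<and> perm_choice S adj n d prm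
   \<and> (\<forall>i<n. \<forall>j<n. W j i = cnj (W i j))
   \<and> (\<forall>i<n. W i i = cinner d (psi i) (psi i))
   \<and> (\<forall>i<n. \<forall>j<n. \<forall>al\<in>S. i \<noteq> j \<and> adj al i \<and> adj al j \<longrightarrow>
        W i j = cinner d (perm_mat_apply d (prm al i) (psi i)) (perm_mat_apply d (prm al j) (psi j)))"

definition psd :: "nat \<Rightarrow> (nat \<Rightarrow> nat \<Rightarrow> complex) \<Rightarrow> bool" where
  "psd n M \<longleftrightarrow> (\<forall>i<n. \<forall>j<n. M j i = cnj (M i j))
     \<and> (\<forall>v. Im (\<Sum>i<n. \<Sum>j<n. cnj (v i) * M i j * v j) = 0
           \<and> 0 \<le> Re (\<Sum>i<n. \<Sum>j<n. cnj (v i) * M i j * v j))"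

end

theory Submission
  imports Defs
begin

lemma int_comp:
  fixes h :: "'b::finite \<Rightarrow> complex"
  shows "integrable (measure_pmf M) (\<lambda>x. h (\<phi> x))"
proof (rule measure_pmf.integrable_const_bound[where B="\<Sum>b\<in>UNIV. norm (h b)"])
  show "AE x in measure_pmf M. norm (h (\<phi> x)) \<le> (\<Sum>b\<in>UNIV. norm (h b))"
    by (intro AE_I2 member_le_sum) auto
qed simp

lemma int_comp2:
  fixes G H :: "'b::finite \<Rightarrow> complex"
  shows "integrable (measure_pmf M) (\<lambda>y. cnj (G (y a)) * H (y b))"
  using int_comp[where h="\<lambda>z. cnj (G (fst z)) * H (snd z)" and M=M and \<phi>="\<lambda>y. (y a, y b)"] by simp

lemma exp_fin:
  fixes h :: "'b::finite \<Rightarrow> complex"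
  shows "measure_pmf.expectation M h = (\<Sum>a\<in>UNIV. complex_of_real (pmf M a) * h a)"
  by (subst integral_measure_pmf[of UNIV]) (auto simp: scaleR_conv_of_real)

lemma pair_exp:
  fixes u :: "'b::finite \<Rightarrow> complex" and w :: "'c::finite \<Rightarrow> complex"
  shows "measure_pmf.expectation (pair_pmf A B) (\<lambda>z. u (fst z) * w (snd z))
       = measure_pmf.expectation A u * measure_pmf.expectation B w"
proof -
  have "measure_pmf.expectation (pair_pmf A B) (\<lambda>z. u (fst z) * w (snd z))
      = (\<Sum>z\<in>UNIV\<times>UNIV. complex_of_real (pmf (pair_pmf A B) z) * (u (fst z) * w (snd z)))"
    by (subst exp_fin) (simp add: UNIV_Times_UNIV[symmetric] del: UNIV_Times_UNIV)
  also have "\<dots> = (\<Sum>(a,b)\<in>UNIV\<times>UNIV. complex_of_real (pmf A a) * u a * (complex_of_real (pmf B b) * w b))"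
    by (rule sum.cong) (auto simp: pmf_pair mult_ac)
  also have "\<dots> = (\<Sum>a\<in>UNIV. \<Sum>b\<in>UNIV. complex_of_real (pmf A a) * u a * (complex_of_real (pmf B b) * w b))"
    by (rule sum.cartesian_product[symmetric])
  also have "\<dots> = measure_pmf.expectation A u * measure_pmf.expectation B w"
    by (simp add: exp_fin sum_product)
  finally show ?thesis .
qed

lemma perm_cinner:
  assumes "\<sigma> permutes {0..<d}" "\<tau> permutes {0..<d}"
  shows "cinner d (perm_mat_apply d \<sigma> u) (perm_mat_apply d \<tau> w)
       = (\<Sum>x<d. \<Sum>x'<d. if \<sigma> x = \<tau> x' then cnj (u x) * w x' else 0)"
proof -
  have s: "\<And>x. x < d \<Longrightarrow> \<sigma> x < d"
    using assms(1) by (metis atLeastLessThan_iff permutes_in_image zero_le)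
  have t: "\<And>x. x < d \<Longrightarrow> \<tau> x < d"
    using assms(2) by (metis atLeastLessThan_iff permutes_in_image zero_le)
  have "cinner d (perm_mat_apply d \<sigma> u) (perm_mat_apply d \<tau> w)
     = (\<Sum>y<d. \<Sum>x<d. \<Sum>x'<d. (if y = \<sigma> x then (if y = \<tau> x' then cnj (u x) * w x' else 0) else 0))"
    unfolding cinner_def perm_mat_apply_def cnj_sum sum_product by (intro sum.cong refl) simp
  also have "\<dots> = (\<Sum>x<d. \<Sum>y<d. \<Sum>x'<d. (if y = \<sigma> x then (if y = \<tau> x' then cnj (u x) * w x' else 0) else 0))"
    by (rule sum.swap)
  also have "\<dots> = (\<Sum>x<d. \<Sum>x'<d. \<Sum>y<d. (if y = \<sigma> x then (if y = \<tau> x' then cnj (u x) * w x' else 0) else 0))"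
    by (rule sum.cong[OF refl]) (rule sum.swap)
  also have "\<dots> = (\<Sum>x<d. \<Sum>x'<d. if \<sigma> x = \<tau> x' then cnj (u x) * w x' else 0)"
    by (intro sum.cong refl) (auto simp: s t if_distrib cong: if_cong)
  finally show ?thesis .
qed

lemma cov_herm: "covariance p f j i = cnj (covariance p f i j)"
proof -
  have e: "measure_pmf.expectation p (\<lambda>x. f i (x i) * cnj (f j (x j))) = cnj (measure_pmf.expectation p (\<lambda>x. f j (x j) * cnj (f i (x i))))"
  proof -
    have e1: "(\<lambda>x. f i (x i) * cnj (f j (x j))) = (\<lambda>x. cnj (f j (x j) * cnj (f i (x i))))"
      by (auto simp: mult.commute)
    show ?thesis unfolding e1 by (rule Bochner_Integration.integral_cnj)
  qed
  show ?thesis unfolding covariance_def apply (simp add: mult.commute) by (rule e)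
qed

lemma core:
  fixes S :: "'s set" and adj :: "'s \<Rightarrow> nat \<Rightarrow> bool" and n :: nat
    and p :: "(nat \<Rightarrow> 'a::finite) pmf"
    and QQ :: "(nat \<times> nat \<Rightarrow> 'a) pmf"
    and f :: "nat \<Rightarrow> 'a \<Rightarrow> complex"
    and d :: nat and psi :: "nat \<Rightarrow> nat \<Rightarrow> complex"
    and prm :: "'s \<Rightarrow> nat \<Rightarrow> nat \<Rightarrow> nat" and W :: "nat \<Rightarrow> nat \<Rightarrow> complex"
    and v :: "nat \<Rightarrow> complex"
  assumes nd: "ndcs S adj n"
    and C0: "\<forall>i<n. \<forall>j<n. i \<noteq> j \<and> \<not> shares_source S adj i j \<longrightarrow>
        map_pmf (\<lambda>x. (x i, x j)) p = pair_pmf (map_pmf (\<lambda>x. x i) p) (map_pmf (\<lambda>x. x j) p)"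
    and M: "\<forall>i<n. \<forall>k<d. map_pmf (\<lambda>y. y (i, k)) QQ = map_pmf (\<lambda>x. x i) p"
    and J: "\<forall>i<n. \<forall>j<n. \<forall>k<d. \<forall>l<d. i \<noteq> j \<and> infl_shares_source S adj prm (i, k) (j, l) \<longrightarrow>
           map_pmf (\<lambda>y. (y (i, k), y (j, l))) QQ = map_pmf (\<lambda>x. (x i, x j)) p"
    and I: "\<forall>i<n. \<forall>j<n. \<forall>k<d. \<forall>l<d. (i, k) \<noteq> (j, l) \<and> \<not> infl_shares_source S adj prm (i, k) (j, l) \<longrightarrow>
           map_pmf (\<lambda>y. (y (i, k), y (j, l))) QQ
             = pair_pmf (map_pmf (\<lambda>y. y (i, k)) QQ) (map_pmf (\<lambda>y. y (j, l)) QQ)"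
    and tg: "twisted_gram S adj n d psi prm W"
  shows "\<exists>r\<ge>0. (\<Sum>i<n. \<Sum>j<n. cnj (v i) * (covariance p f i j * W i j) * v j) = complex_of_real r"
proof -
  define \<mu> where "\<mu> i = measure_pmf.expectation p (\<lambda>x. f i (x i))" for i
  define g where "g i a = f i a - \<mu> i" for i a
  define C where "C i j = covariance p f i j" for i j
  define sh where "sh i k j l = infl_shares_source S adj prm (i,k) (j,l)" for i k j l
  define T where "T i k j l = measure_pmf.expectation QQ (\<lambda>y. cnj (g i (y (i,k))) * g j (y (j,l)))" for i k j l
  define c where "c i k = v i * psi i k" for i k
  have perm: "perm_choice S adj n d prm" and d0: "0 < d"
    and Wh: "\<forall>i<n. W i i = cinner d (psi i) (psi i)"
    and Wo: "\<forall>i<n. \<forall>j<n. \<forall>al\<in>S. i \<noteq> j \<and> adj al i \<and> adj al j \<longrightarrow>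
        W i j = cinner d (perm_mat_apply d (prm al i) (psi i)) (perm_mat_apply d (prm al j) (psi j))"
    using tg unfolding twisted_gram_def by blast+
  have intf: "integrable p (\<lambda>x. f i (x i))" for i
    using int_comp[where h="f i" and M=p and \<phi>="\<lambda>x. x i"] by simp
  have intff: "integrable p (\<lambda>x. cnj (f i (x i)) * f j (x j))" for i j
    by (rule int_comp2)
  have cov: "C i j = measure_pmf.expectation p (\<lambda>x. cnj (g i (x i)) * g j (x j))" for i j
  proof -
    have e: "(\<lambda>x. cnj (g i (x i)) * g j (x j)) = (\<lambda>x. cnj (f i (x i)) * f j (x j)
        - cnj (\<mu> i) * f j (x j) - \<mu> j * cnj (f i (x i)) + cnj (\<mu> i) * \<mu> j)"
      by (auto simp: g_def algebra_simps)
    have i1: "integrable p (\<lambda>x. cnj (f i (x i)) * f j (x j) - cnj (\<mu> i) * f j (x j))"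
      using intff intf by auto
    have i2: "integrable p (\<lambda>x. cnj (f i (x i)) * f j (x j) - cnj (\<mu> i) * f j (x j) - \<mu> j * cnj (f i (x i)))"
      using i1 intf by auto
    show ?thesis unfolding e C_def covariance_def
      using i1 i2 intf intff by (simp add: \<mu>_def)
  qed
  have cent: "measure_pmf.expectation (map_pmf (\<lambda>x. x j) p) (g j) = 0" for j
    using intf[of j] by (simp add: g_def \<mu>_def)
  have centc: "measure_pmf.expectation A (\<lambda>a. cnj (g i a)) = cnj (measure_pmf.expectation A (g i))" for A i
    by simp
  have shinj: "\<not> sh i k i l" if "k \<noteq> l" "i < n" for i k l
  proof
    assume "sh i k i l"
    then obtain al where al: "al \<in> S" "adj al i" "prm al i k = prm al i l"
      unfolding sh_def infl_shares_source_def by auto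
    then have "prm al i permutes {0..<d}" using perm \<open>i<n\<close> unfolding perm_choice_def by auto
    then have "inj (prm al i)" by (rule permutes_inj)
    with al that show False by (auto dest: injD)
  qed
  have Tval: "T i k j l = (if i = j \<and> k = l then C i i else if i \<noteq> j \<and> sh i k j l then C i j else 0)"
    if ij: "i < n" "j < n" "k < d" "l < d" for i j k l
  proof (cases "i = j \<and> k = l")
    case True
    then have "T i k j l = measure_pmf.expectation (map_pmf (\<lambda>y. y (i,k)) QQ) (\<lambda>a. cnj (g i a) * g i a)"
      by (simp add: T_def)
    also have "\<dots> = measure_pmf.expectation (map_pmf (\<lambda>x. x i) p) (\<lambda>a. cnj (g i a) * g i a)"
      using M ij by simp
    also have "\<dots> = C i i" by (simp add: cov)
    finally show ?thesis using True by simp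
  next
    case nt: False
    show ?thesis
    proof (cases "i \<noteq> j \<and> sh i k j l")
      case True
      then have "T i k j l = measure_pmf.expectation (map_pmf (\<lambda>y. (y (i,k), y (j,l))) QQ)
            (\<lambda>z. cnj (g i (fst z)) * g j (snd z))"
        by (simp add: T_def)
      also have "\<dots> = measure_pmf.expectation (map_pmf (\<lambda>x. (x i, x j)) p) (\<lambda>z. cnj (g i (fst z)) * g j (snd z))"
        using J ij True unfolding sh_def by simp
      also have "\<dots> = C i j" by (simp add: cov)
      finally show ?thesis using True nt by simp
    next
      case False
      have nsh: "\<not> sh i k j l"
      proof (cases "i = j")
        case True
        then have "k \<noteq> l" using nt by simp
        then show ?thesis using shinj[of k l i] ij True by simp
      next
        case False2: False
        then show ?thesis using False by simp
      qed
      have ne: "(i, k) \<noteq> (j, l)" using nt by auto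
      have "T i k j l = measure_pmf.expectation (map_pmf (\<lambda>y. (y (i,k), y (j,l))) QQ)
            (\<lambda>z. cnj (g i (fst z)) * g j (snd z))"
        by (simp add: T_def)
      also have "\<dots> = measure_pmf.expectation (pair_pmf (map_pmf (\<lambda>y. y (i, k)) QQ) (map_pmf (\<lambda>y. y (j, l)) QQ))
            (\<lambda>z. cnj (g i (fst z)) * g j (snd z))"
        using I ij nsh ne unfolding sh_def by simp
      also have "\<dots> = measure_pmf.expectation (map_pmf (\<lambda>y. y (i, k)) QQ) (\<lambda>a. cnj (g i a))
          * measure_pmf.expectation (map_pmf (\<lambda>y. y (j, l)) QQ) (g j)"
        by (rule pair_exp)
      also have "measure_pmf.expectation (map_pmf (\<lambda>y. y (j, l)) QQ) (g j) = 0"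
        using M ij cent by metis
      finally show ?thesis using nt nsh by auto
    qed
  qed
  have blk: "(\<Sum>k<d. \<Sum>l<d. cnj (c i k) * c j l * T i k j l) = cnj (v i) * (C i j * W i j) * v j"
    if ij: "i < n" "j < n" for i j
  proof (cases "i = j")
    case True
    have "(\<Sum>k<d. \<Sum>l<d. cnj (c i k) * c j l * T i k j l)
        = (\<Sum>k<d. \<Sum>l<d. if k = l then cnj (c i k) * c i l * C i i else 0)"
      using True ij by (intro sum.cong refl) (auto simp: Tval)
    also have "\<dots> = (\<Sum>k<d. cnj (c i k) * c i k * C i i)"
      by (simp add: if_distrib cong: if_cong)
    also have "\<dots> = cnj (v i) * (C i i * W i i) * v i"
      using Wh ij by (simp add: c_def cinner_def sum_distrib_left sum_distrib_right mult_ac)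
    finally show ?thesis using True by simp
  next
    case ne: False
    show ?thesis
    proof (cases "shares_source S adj i j")
      case True
      then obtain al where al: "al \<in> S" "adj al i" "adj al j" unfolding shares_source_def by auto
      have shiff: "sh i k j l \<longleftrightarrow> prm al i k = prm al j l" for k l
      proof
        assume "sh i k j l"
        then obtain be where be: "be \<in> S" "adj be i" "adj be j" "prm be i k = prm be j l"
          unfolding sh_def infl_shares_source_def by auto
        have ndc: "\<forall>i<n. \<forall>j<n. i \<noteq> j \<longrightarrow> (\<forall>al\<in>S. \<forall>be\<in>S.
           adj al i \<and> adj al j \<and> adj be i \<and> adj be j \<longrightarrow> al = be)"
          using nd unfolding ndcs_def by (rule conjunct2)
        have "be = al" using ndc be al ne ij by metis
        then show "prm al i k = prm al j l" using be by simp
      next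
        assume "prm al i k = prm al j l"
        then show "sh i k j l" using al unfolding sh_def infl_shares_source_def by auto
      qed
      have pi: "prm al i permutes {0..<d}" "prm al j permutes {0..<d}"
        using perm al ij unfolding perm_choice_def by auto
      have Wij: "W i j = (\<Sum>x<d. \<Sum>x'<d. if prm al i x = prm al j x' then cnj (psi i x) * psi j x' else 0)"
        using Wo al ij ne perm_cinner[OF pi] by simp
      have "(\<Sum>k<d. \<Sum>l<d. cnj (c i k) * c j l * T i k j l)
          = (\<Sum>k<d. \<Sum>l<d. cnj (v i) * (C i j * (if prm al i k = prm al j l then cnj (psi i k) * psi j l else 0)) * v j)"
        using ne ij by (intro sum.cong refl) (auto simp: Tval shiff c_def)
      also have "\<dots> = cnj (v i) * (C i j * W i j) * v j"
        unfolding Wij by (simp add: sum_distrib_left sum_distrib_right)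
      finally show ?thesis .
    next
      case False
      have sh0: "\<not> sh i k j l" for k l
        using False unfolding sh_def infl_shares_source_def shares_source_def by auto
      have "C i j = measure_pmf.expectation (map_pmf (\<lambda>x. (x i, x j)) p) (\<lambda>z. cnj (g i (fst z)) * g j (snd z))"
        by (simp add: cov)
      also have "\<dots> = measure_pmf.expectation (pair_pmf (map_pmf (\<lambda>x. x i) p) (map_pmf (\<lambda>x. x j) p))
            (\<lambda>z. cnj (g i (fst z)) * g j (snd z))"
        using C0 ij ne False by simp
      also have "\<dots> = measure_pmf.expectation (map_pmf (\<lambda>x. x i) p) (\<lambda>a. cnj (g i a))
          * measure_pmf.expectation (map_pmf (\<lambda>x. x j) p) (g j)"
        by (rule pair_exp)
      also have "\<dots> = 0" using cent by simp
      finally have "C i j = 0" .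
      moreover have "(\<Sum>k<d. \<Sum>l<d. cnj (c i k) * c j l * T i k j l) = 0"
        using ne ij by (intro sum.neutral ballI) (auto simp: Tval sh0)
      ultimately show ?thesis by simp
    qed
  qed
  define Y where "Y y = (\<Sum>i<n. \<Sum>k<d. c i k * g i (y (i,k)))" for y
  have YY: "cnj (Y y) * Y y = (\<Sum>i<n. \<Sum>j<n. \<Sum>k<d. \<Sum>l<d.
      cnj (c i k) * c j l * (cnj (g i (y (i,k))) * g j (y (j,l))))" for y
  proof -
    have "cnj (Y y) * Y y = (\<Sum>i<n. \<Sum>j<n. \<Sum>k<d. \<Sum>l<d.
      cnj (c i k * g i (y (i,k))) * (c j l * g j (y (j,l))))"
      unfolding Y_def cnj_sum sum_product by (rule refl)
    also have "\<dots> = (\<Sum>i<n. \<Sum>j<n. \<Sum>k<d. \<Sum>l<d.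
      cnj (c i k) * c j l * (cnj (g i (y (i,k))) * g j (y (j,l))))"
      by (intro sum.cong refl) (simp add: mult_ac)
    finally show ?thesis .
  qed
  have sq: "cnj (Y y) * Y y = complex_of_real ((cmod (Y y))\<^sup>2)" for y
    by (subst complex_norm_square) (rule mult.commute)
  have ih: "integrable QQ (\<lambda>y. cnj (c i k) * c j l * (cnj (g i (y (i,k))) * g j (y (j,l))))" for i j k l
    by (rule integrable_mult_right) (rule int_comp2)
  have "(\<Sum>i<n. \<Sum>j<n. cnj (v i) * (covariance p f i j * W i j) * v j)
      = (\<Sum>i<n. \<Sum>j<n. \<Sum>k<d. \<Sum>l<d. cnj (c i k) * c j l * T i k j l)"
    by (intro sum.cong refl) (simp add: blk C_def)
  also have "\<dots> = measure_pmf.expectation QQ (\<lambda>y. cnj (Y y) * Y y)"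
    unfolding YY T_def by (simp add: ih)
  also have "\<dots> = measure_pmf.expectation QQ (\<lambda>y. complex_of_real ((cmod (Y y))\<^sup>2))"
    using sq by (simp only:)
  also have "\<dots> = complex_of_real (measure_pmf.expectation QQ (\<lambda>y. (cmod (Y y))\<^sup>2))"
    by (rule integral_complex_of_real)
  finally show ?thesis
    by (intro exI[of _ "measure_pmf.expectation QQ (\<lambda>y. (cmod (Y y))\<^sup>2)"]) (auto intro: integral_nonneg)
qed


theorem lemma6:
  fixes S :: "'s set" and adj :: "'s \<Rightarrow> nat \<Rightarrow> bool" and n :: nat
    and p :: "(nat \<Rightarrow> 'a::finite) pmf"
    and Q :: "nat \<Rightarrow> ('s \<Rightarrow> nat \<Rightarrow> nat \<Rightarrow> nat) \<Rightarrow> (nat \<times> nat \<Rightarrow> 'a) pmf"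
    and f :: "nat \<Rightarrow> 'a \<Rightarrow> complex"
    and d :: nat and psi :: "nat \<Rightarrow> nat \<Rightarrow> complex"
    and prm :: "'s \<Rightarrow> nat \<Rightarrow> nat \<Rightarrow> nat" and W :: "nat \<Rightarrow> nat \<Rightarrow> complex"
  assumes "ndcs S adj n"
    and "causally_consistent S adj n p Q"
    and "twisted_gram S adj n d psi prm W"
  shows "psd n (\<lambda>i j. covariance p f i j * W i j)"
proof -
  have d0: "0 < d" and perm: "perm_choice S adj n d prm"
    and Wsym: "\<forall>i<n. \<forall>j<n. W j i = cnj (W i j)"
    using assms(3) unfolding twisted_gram_def by blast+
  note cc = assms(2)[unfolded causally_consistent_def]
  have C0: "\<forall>i<n. \<forall>j<n. i \<noteq> j \<and> \<not> shares_source S adj i j \<longrightarrow>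
        map_pmf (\<lambda>x. (x i, x j)) p = pair_pmf (map_pmf (\<lambda>x. x i) p) (map_pmf (\<lambda>x. x j) p)"
    using cc by (rule conjunct1)
  have quad: "\<exists>r\<ge>0. (\<Sum>i<n. \<Sum>j<n. cnj (v i) * (covariance p f i j * W i j) * v j) = complex_of_real r" for v
  proof (cases "2 \<le> d")
    case True
    have C1: "(\<forall>i<n. \<forall>k<d. map_pmf (\<lambda>y. y (i, k)) (Q d prm) = map_pmf (\<lambda>x. x i) p)
      \<and> (\<forall>i<n. \<forall>j<n. \<forall>k<d. \<forall>l<d. i \<noteq> j \<and> infl_shares_source S adj prm (i, k) (j, l) \<longrightarrow>
           map_pmf (\<lambda>y. (y (i, k), y (j, l))) (Q d prm) = map_pmf (\<lambda>x. (x i, x j)) p)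
      \<and> (\<forall>i<n. \<forall>j<n. \<forall>k<d. \<forall>l<d. (i, k) \<noteq> (j, l) \<and> \<not> infl_shares_source S adj prm (i, k) (j, l) \<longrightarrow>
           map_pmf (\<lambda>y. (y (i, k), y (j, l))) (Q d prm)
             = pair_pmf (map_pmf (\<lambda>y. y (i, k)) (Q d prm)) (map_pmf (\<lambda>y. y (j, l)) (Q d prm)))"
      using conjunct2[OF cc, rule_format, OF conjI[OF True perm]] .
    show ?thesis
      by (rule core[where QQ="Q d prm" and prm=prm and d=d and psi=psi, OF assms(1) C0 _ _ _ assms(3)])
        (use C1 in blast)+
  next
    case False
    with d0 have d1: "d = 1" by simp
    define Q1 where "Q1 = map_pmf (\<lambda>x (z::nat\<times>nat). x (fst z)) p"
    have z: "prm al i 0 = 0" if "al \<in> S" "i < n" "adj al i" for al i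
    proof -
      have "prm al i permutes {0..<1}" using perm that d1 unfolding perm_choice_def by auto
      then have "prm al i 0 \<in> {0..<1}" by (simp add: permutes_in_image)
      then show ?thesis by simp
    qed
    show ?thesis
    proof (rule core[where QQ="Q1" and prm=prm and d=d and psi=psi, OF assms(1) C0 _ _ _ assms(3)])
      show "\<forall>i<n. \<forall>k<d. map_pmf (\<lambda>y. y (i, k)) Q1 = map_pmf (\<lambda>x. x i) p"
        by (simp add: Q1_def map_pmf_comp)
      show "\<forall>i<n. \<forall>j<n. \<forall>k<d. \<forall>l<d. i \<noteq> j \<and> infl_shares_source S adj prm (i, k) (j, l) \<longrightarrow>
           map_pmf (\<lambda>y. (y (i, k), y (j, l))) Q1 = map_pmf (\<lambda>x. (x i, x j)) p"
        by (simp add: Q1_def map_pmf_comp)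
      show "\<forall>i<n. \<forall>j<n. \<forall>k<d. \<forall>l<d. (i, k) \<noteq> (j, l) \<and> \<not> infl_shares_source S adj prm (i, k) (j, l) \<longrightarrow>
           map_pmf (\<lambda>y. (y (i, k), y (j, l))) Q1
             = pair_pmf (map_pmf (\<lambda>y. y (i, k)) Q1) (map_pmf (\<lambda>y. y (j, l)) Q1)"
      proof (intro allI impI)
        fix i j k l
        assume ij: "i < n" "j < n" "k < d" "l < d"
          and h: "(i, k) \<noteq> (j, l) \<and> \<not> infl_shares_source S adj prm (i, k) (j, l)"
        have kl: "k = 0" "l = 0" using ij d1 by auto
        have ne: "i \<noteq> j" using h kl by auto
        have ns: "\<not> shares_source S adj i j"
        proof
          assume "shares_source S adj i j"
          then obtain al where "al \<in> S" "adj al i" "adj al j" unfolding shares_source_def by auto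
          then have "infl_shares_source S adj prm (i, k) (j, l)"
            using z ij kl unfolding infl_shares_source_def by auto
          with h show False by simp
        qed
        show "map_pmf (\<lambda>y. (y (i, k), y (j, l))) Q1
             = pair_pmf (map_pmf (\<lambda>y. y (i, k)) Q1) (map_pmf (\<lambda>y. y (j, l)) Q1)"
          using C0 ij ne ns by (simp add: Q1_def map_pmf_comp)
      qed
    qed
  qed
  show ?thesis unfolding psd_def
  proof (intro conjI allI impI)
    fix i j assume "i < n" "j < n"
    then have w: "W j i = cnj (W i j)" using Wsym by blast
    show "covariance p f j i * W j i = cnj (covariance p f i j * W i j)"
      unfolding w cov_herm[of p f j i] by (rule complex_cnj_mult[symmetric])
  next
    fix v :: "nat \<Rightarrow> complex"
    from quad[of v] obtain r where "r \<ge> 0"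
      "(\<Sum>i<n. \<Sum>j<n. cnj (v i) * (covariance p f i j * W i j) * v j) = complex_of_real r" by blast
    then show "Im (\<Sum>i<n. \<Sum>j<n. cnj (v i) * (covariance p f i j * W i j) * v j) = 0"
      "0 \<le> Re (\<Sum>i<n. \<Sum>j<n. cnj (v i) * (covariance p f i j * W i j) * v j)" by simp_all
  qed
qed

end
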